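(* Let $\mathcal{L}:\mathbb{R}^n\to\mathbb{R}$ be differentiable with $L$-Lipschitz gradient ($L>0$). Fix $\delta_0>0$, $\varepsilon\ge0$, $\eta_{\mathrm{FCM}}>0$. Let $\mathbf{x}_k\ne\mathbf{0}$ with $\mathbf{g}_k=\nabla\mathcal{L}(\mathbf{x}_k)\neq\mathbf{0}$, assume $\varepsilon\le L\|\mathbf{g}_k\|^2$ and that $\mathcal{L}$ is convex on the segment $[\mathbf{x}_k',\mathbf{x}_k]$, and let $\mathbf{x}_{k+1}$ be produced by one FCM step (as in the context). Then, with $c=\min\{\eta_{\mathrm{FCM}}/(2L),\,1/(8L)\}$, $$\mathcal{L}(\mathbf{x}_{k+1})\le\mathcal{L}(\mathbf{x}_k)-c\,\|\nabla\mathcal{L}(\mathbf{x}_k)\|^2.$$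
   Context: One FCM step from $\mathbf{x}_k$: $\mathbf{g}_k=\nabla\mathcal{L}(\mathbf{x}_k)$, $\delta_k=\delta_0\,\|\mathbf{x}_k\|/\|\mathbf{g}_k\|$, $\mathbf{x}_k'=\mathbf{x}_k-\delta_k\mathbf{g}_k$, $\mathbf{g}_k'=\nabla\mathcal{L}(\mathbf{x}_k')$, $\mathbf{h}_k=(\mathbf{g}_k-\mathbf{g}_k')/\delta_k$, $\alpha_k^{\mathrm{raw}}=\|\mathbf{g}_k\|^2/(\langle\mathbf{g}_k,\mathbf{h}_k\rangle+\varepsilon)$ (with $\alpha_k^{\mathrm{raw}}=+\infty$ if the denominator is $0$), $\alpha_k=\min\{\alpha_k^{\mathrm{raw}},1/L\}$. Single Armijo check: if $\mathcal{L}(\mathbf{x}_k-\alpha_k\mathbf{g}_k)>\mathcal{L}(\mathbf{x}_k)-\eta_{\mathrm{FCM}}\,\alpha_k\|\mathbf{g}_k\|^2$, replace $\alpha_k$ by $\alpha_k/2$ (once, with no further check). Then $\mathbf{x}_{k+1}=\mathbf{x}_k-\alpha_k\mathbf{g}_k$. *)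

theory Defs
  imports "HOL-Analysis.Analysis"
begin

text \<open>One FCM step. The loss is f, its gradient is the function G,
 Lc is the Lipschitz constant L, d0 = delta_0, eps = epsilon, eta = eta_FCM.\<close>

definition fcm_delta :: "(real^'n \<Rightarrow> real^'n) \<Rightarrow> real \<Rightarrow> real^'n \<Rightarrow> real" where
  "fcm_delta G d0 x = d0 * norm x / norm (G x)"

definition fcm_xprime :: "(real^'n \<Rightarrow> real^'n) \<Rightarrow> real \<Rightarrow> real^'n \<Rightarrow> real^'n" where
  "fcm_xprime G d0 x = x - fcm_delta G d0 x *\<^sub>R G x"

definition fcm_h :: "(real^'n \<Rightarrow> real^'n) \<Rightarrow> real \<Rightarrow> real^'n \<Rightarrow> real^'n" where
  "fcm_h G d0 x = (1 / fcm_delta G d0 x) *\<^sub>R (G x - G (fcm_xprime G d0 x))"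

text \<open>alpha = min(alpha_raw, 1/L), where alpha_raw = +infinity if the denominator vanishes.\<close>
definition fcm_alpha :: "(real^'n \<Rightarrow> real^'n) \<Rightarrow> real \<Rightarrow> real \<Rightarrow> real \<Rightarrow> real^'n \<Rightarrow> real" where
  "fcm_alpha G Lc d0 eps x =
     (let den = G x \<bullet> fcm_h G d0 x + eps
      in if den = 0 then 1 / Lc else min ((norm (G x))\<^sup>2 / den) (1 / Lc))"

definition fcm_alpha_final :: "(real^'n \<Rightarrow> real) \<Rightarrow> (real^'n \<Rightarrow> real^'n) \<Rightarrow> real \<Rightarrow> real \<Rightarrow> real \<Rightarrow> real \<Rightarrow> real^'n \<Rightarrow> real" where
  "fcm_alpha_final f G Lc d0 eps eta x =
     (let a = fcm_alpha G Lc d0 eps x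
      in if f (x - a *\<^sub>R G x) > f x - eta * a * (norm (G x))\<^sup>2 then a / 2 else a)"

definition fcm_step :: "(real^'n \<Rightarrow> real) \<Rightarrow> (real^'n \<Rightarrow> real^'n) \<Rightarrow> real \<Rightarrow> real \<Rightarrow> real \<Rightarrow> real \<Rightarrow> real^'n \<Rightarrow> real^'n" where
  "fcm_step f G Lc d0 eps eta x = x - fcm_alpha_final f G Lc d0 eps eta x *\<^sub>R G x"

end

theory Submission
  imports Defs
begin

lemma line_deriv:
  fixes f :: "real^'n \<Rightarrow> real" and G :: "real^'n \<Rightarrow> real^'n"
  assumes grad: "\<And>y. (f has_derivative (\<lambda>h. G y \<bullet> h)) (at y)"
  shows "((\<lambda>t. f (a + t *\<^sub>R v)) has_real_derivative (G (a + t *\<^sub>R v) \<bullet> v)) (at t)"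
proof -
  have l: "((\<lambda>t. a + t *\<^sub>R v) has_derivative (\<lambda>h. h *\<^sub>R v)) (at t)"
    by (auto intro!: derivative_eq_intros)
  have "((f \<circ> (\<lambda>t. a + t *\<^sub>R v)) has_derivative ((\<lambda>h. G (a + t *\<^sub>R v) \<bullet> h) \<circ> (\<lambda>h. h *\<^sub>R v))) (at t)"
    by (rule diff_chain_at[OF l grad])
  moreover have "((\<lambda>h. G (a + t *\<^sub>R v) \<bullet> h) \<circ> (\<lambda>h. h *\<^sub>R v)) = (*) (G (a + t *\<^sub>R v) \<bullet> v)"
    by (auto simp: fun_eq_iff o_def mult.commute)
  ultimately show ?thesis unfolding has_field_derivative_def by (simp add: o_def)
qed

lemma tangent_seg:
  fixes f :: "real^'n \<Rightarrow> real" and G :: "real^'n \<Rightarrow> real^'n"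
  assumes grad: "\<And>y. (f has_derivative (\<lambda>h. G y \<bullet> h)) (at y)"
    and cvx: "convex_on (closed_segment a b) f"
  shows "G a \<bullet> (b - a) \<le> f b - f a"
proof -
  have d: "((\<lambda>t. f (a + t *\<^sub>R (b - a))) has_real_derivative (G a \<bullet> (b - a))) (at 0)"
    using line_deriv[OF grad, of a "b - a" 0] by simp
  hence "((\<lambda>t. (f (a + t *\<^sub>R (b - a)) - f a) / t) \<longlongrightarrow> G a \<bullet> (b - a)) (at 0)"
    unfolding has_field_derivative_iff by simp
  hence lim: "((\<lambda>t. (f (a + t *\<^sub>R (b - a)) - f a) / t) \<longlongrightarrow> G a \<bullet> (b - a)) (at_right 0)"
    by (rule filterlim_mono) (auto simp: at_le)
  have ev: "eventually (\<lambda>t. (f (a + t *\<^sub>R (b - a)) - f a) / t \<le> f b - f a) (at_right (0::real))"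
  proof (rule eventually_at_rightI[of 0 1])
    fix t :: real assume "t \<in> {0<..<1}"
    hence t: "0 < t" "t < 1" by auto
    have eq: "a + t *\<^sub>R (b - a) = (1 - t) *\<^sub>R a + t *\<^sub>R b" by (simp add: algebra_simps)
    have "f (a + t *\<^sub>R (b - a)) \<le> (1 - t) * f a + t * f b"
      unfolding eq using t by (intro convex_onD[OF cvx]) auto
    hence "f (a + t *\<^sub>R (b - a)) - f a \<le> t * (f b - f a)" by (simp add: algebra_simps)
    thus "(f (a + t *\<^sub>R (b - a)) - f a) / t \<le> f b - f a" using t by (simp add: divide_simps mult.commute)
  qed simp
  show ?thesis by (rule tendsto_upperbound[OF lim ev]) simp
qed

lemma descent:
  fixes f :: "real^'n \<Rightarrow> real" and G :: "real^'n \<Rightarrow> real^'n"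
  assumes grad: "\<And>y. (f has_derivative (\<lambda>h. G y \<bullet> h)) (at y)"
    and lip: "\<And>y z. norm (G y - G z) \<le> Lc * norm (y - z)"
  shows "f (x + v) \<le> f x + G x \<bullet> v + Lc / 2 * (norm v)\<^sup>2"
proof -
  define psi where "psi t = f (x + t *\<^sub>R v) - t * (G x \<bullet> v) - Lc / 2 * t\<^sup>2 * (norm v)\<^sup>2" for t
  have D: "(psi has_real_derivative (G (x + t *\<^sub>R v) \<bullet> v - G x \<bullet> v - Lc * t * (norm v)\<^sup>2)) (at t)" for t
    unfolding psi_def
    by (auto intro!: derivative_eq_intros line_deriv[OF grad] simp: power2_eq_square)
  have "psi 1 \<le> psi 0"
  proof (rule DERIV_nonpos_imp_decreasing_open[of 0 1 psi])
    fix t :: real assume t: "0 < t" "t < 1"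
    have "G (x + t *\<^sub>R v) \<bullet> v - G x \<bullet> v = (G (x + t *\<^sub>R v) - G x) \<bullet> v" by (simp add: inner_diff_left)
    also have "\<dots> \<le> norm (G (x + t *\<^sub>R v) - G x) * norm v" by (rule norm_cauchy_schwarz)
    also have "\<dots> \<le> Lc * norm (t *\<^sub>R v) * norm v"
      using lip[of "x + t *\<^sub>R v" x] by (intro mult_right_mono) auto
    also have "\<dots> = Lc * t * (norm v)\<^sup>2" using t by (simp add: power2_eq_square abs_of_pos)
    finally have "G (x + t *\<^sub>R v) \<bullet> v - G x \<bullet> v - Lc * t * (norm v)\<^sup>2 \<le> 0" by simp
    thus "\<exists>y. DERIV psi t :> y \<and> y \<le> 0" using D by blast
  next
    show "continuous_on {0..1} psi"
      using D by (meson DERIV_isCont continuous_at_imp_continuous_on)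
  qed simp
  thus ?thesis unfolding psi_def by simp
qed


theorem mainTheorem3:
  fixes f :: "real^'n \<Rightarrow> real" and G :: "real^'n \<Rightarrow> real^'n"
    and Lc d0 eps eta :: real and x :: "real^'n"
  assumes grad: "\<And>y. (f has_derivative (\<lambda>h. G y \<bullet> h)) (at y)"
    and lip: "\<And>y z. norm (G y - G z) \<le> Lc * norm (y - z)"
    and Lpos: "Lc > 0" and d0pos: "d0 > 0" and epsnn: "eps \<ge> 0" and etapos: "eta > 0"
    and xnz: "x \<noteq> 0" and gnz: "G x \<noteq> 0"
    and epsle: "eps \<le> Lc * (norm (G x))\<^sup>2"
    and cvx: "convex_on (closed_segment (fcm_xprime G d0 x) x) f"
  shows "f (fcm_step f G Lc d0 eps eta x)
           \<le> f x - min (eta / (2 * Lc)) (1 / (8 * Lc)) * (norm (G x))\<^sup>2"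
proof -
  define g where "g = G x"
  define dl where "dl = fcm_delta G d0 x"
  define x' where "x' = fcm_xprime G d0 x"
  define N where "N = (norm g)\<^sup>2"
  have Npos: "N > 0" using gnz unfolding N_def g_def by simp
  have gg: "g \<bullet> g = N" unfolding N_def by (simp add: power2_norm_eq_inner)
  have dlpos: "dl > 0" using xnz gnz d0pos unfolding dl_def fcm_delta_def by simp
  have x'eq: "x' = x - dl *\<^sub>R g" unfolding x'_def fcm_xprime_def dl_def g_def by simp
  have t1: "G x' \<bullet> (x - x') \<le> f x - f x'"
    by (rule tangent_seg[OF grad]) (use cvx x'_def in simp)
  have t2: "G x \<bullet> (x' - x) \<le> f x' - f x"
    by (rule tangent_seg[OF grad]) (use cvx x'_def closed_segment_commute in metis)
  have "dl * (G x' \<bullet> g) - dl * N \<le> 0"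
    using t1 t2 unfolding x'eq g_def[symmetric] by (simp add: gg)
  hence "dl * (G x' \<bullet> g - N) \<le> 0" by (simp add: algebra_simps)
  hence "G x' \<bullet> g - N \<le> 0" using dlpos by (simp add: mult_le_0_iff)
  hence low: "0 \<le> g \<bullet> (g - G x')" using gg by (simp add: inner_diff_right inner_commute)
  have "g \<bullet> (g - G x') \<le> norm g * norm (g - G x')" by (rule norm_cauchy_schwarz)
  also have "\<dots> \<le> norm g * (Lc * norm (x - x'))"
    using lip[of x x'] unfolding g_def by (intro mult_left_mono) auto
  also have "\<dots> = dl * (Lc * N)" using dlpos unfolding x'eq N_def by (simp add: power2_eq_square)
  finally have up: "g \<bullet> (g - G x') \<le> dl * (Lc * N)" .
  define gh where "gh = g \<bullet> fcm_h G d0 x"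
  have gh_eq: "gh = g \<bullet> (g - G x') / dl"
    unfolding gh_def fcm_h_def dl_def[symmetric] x'_def[symmetric] g_def by simp
  have gh0: "0 \<le> gh" using low dlpos gh_eq by simp
  have "dl * gh \<le> dl * (Lc * N)" using up dlpos gh_eq by simp
  hence gh1: "gh \<le> Lc * N" using dlpos by (simp add: mult_le_cancel_left_pos)
  define a where "a = fcm_alpha G Lc d0 eps x"
  have a_eq: "a = (if gh + eps = 0 then 1 / Lc else min (N / (gh + eps)) (1 / Lc))"
    unfolding a_def fcm_alpha_def gh_def N_def g_def by (simp add: Let_def)
  have aup: "a \<le> 1 / Lc" using a_eq by auto
  have alow: "1 / (2 * Lc) \<le> a"
  proof (cases "gh + eps = 0")
    case True thus ?thesis using a_eq Lpos by (simp add: divide_simps)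
  next
    case False
    hence dp: "gh + eps > 0" using gh0 epsnn by simp
    have "gh + eps \<le> 2 * Lc * N" using gh1 epsle unfolding N_def g_def by simp
    hence "1 / (2 * Lc) \<le> N / (gh + eps)" using dp Lpos Npos
      by (simp add: divide_simps) (simp add: mult.commute)
    thus ?thesis using a_eq False Lpos by (simp add: divide_simps)
  qed
  have apos: "a > 0" using alow Lpos by (smt (verit) divide_pos_pos)
  have desc: "f (x - s *\<^sub>R g) \<le> f x - s / 2 * N" if "0 < s" "s \<le> 1 / Lc" for s
  proof -
    have "f (x + (- s *\<^sub>R g)) \<le> f x + g \<bullet> (- s *\<^sub>R g) + Lc / 2 * (norm (- s *\<^sub>R g))\<^sup>2"
      using descent[OF grad lip, of x "- s *\<^sub>R g"] unfolding g_def by simp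
    also have "\<dots> = f x - s * N + (Lc * s) * s / 2 * N"
      using that unfolding N_def by (simp add: power2_eq_square power_mult_distrib inner_commute
          power2_norm_eq_inner[symmetric] algebra_simps)
    also have "\<dots> \<le> f x - s * N + 1 * s / 2 * N"
    proof -
      have "Lc * s \<le> 1" using that Lpos by (simp add: field_simps)
      thus ?thesis using that Npos by (intro add_left_mono mult_right_mono divide_right_mono) auto
    qed
    finally show ?thesis by (simp add: mult.commute)
  qed
  define c where "c = min (eta / (2 * Lc)) (1 / (8 * Lc))"
  have step: "fcm_step f G Lc d0 eps eta x
      = x - (if f (x - a *\<^sub>R g) > f x - eta * a * N then a / 2 else a) *\<^sub>R g"
    unfolding fcm_step_def fcm_alpha_final_def a_def[symmetric] g_def N_def by (simp add: Let_def)
  show ?thesis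
  proof (cases "f (x - a *\<^sub>R g) > f x - eta * a * N")
    case True
    have "f (x - (a / 2) *\<^sub>R g) \<le> f x - (a / 2) / 2 * N" using apos aup by (intro desc) auto
    also have "\<dots> \<le> f x - c * N"
    proof -
      have "c \<le> 1 / (8 * Lc)" unfolding c_def by simp
      also have "\<dots> \<le> a / 4" using alow Lpos by (simp add: divide_simps)
      finally show ?thesis using Npos by (simp add: mult_right_mono)
    qed
    finally show ?thesis using True step unfolding c_def N_def g_def by simp
  next
    case False
    have "f (x - a *\<^sub>R g) \<le> f x - eta * a * N" using False by simp
    also have "\<dots> \<le> f x - c * N"
    proof -
      have "c \<le> eta / (2 * Lc)" unfolding c_def by simp
      also have "\<dots> = eta * (1 / (2 * Lc))" by simp
      also have "\<dots> \<le> eta * a" using alow etapos by (intro mult_left_mono) auto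
      finally show ?thesis using Npos by (simp add: mult_right_mono)
    qed
    finally show ?thesis using False step unfolding c_def N_def g_def by simp
  qed
qed

end
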